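(* Every maximal chain set $E\subseteq M$ is closed, and hence compact.
   Context: Hybrid system setup: $G$ is a finite directed graph with vertex set $V=\{1,\dots,n\}$ (loops allowed); $\Omega$ is the set of sequences $(x_i)_{i\in\mathbb Z}\in V^{\mathbb Z}$ with an edge from $x_i$ to $x_{i+1}$ for all $i$. Fix $h>0$. $\bar\Delta$ is the set of functions $x:\mathbb R\to V$ constant on each $[kh,(k+1)h)$, $k\in\mathbb Z$, with $(x(kh))_k\in\Omega$; $\Delta=\{x(\cdot+t):x\in\bar\Delta, t\in\mathbb R\}$ with metric $d(x,y)=\sum_{i\in\mathbb Z}4^{-|i|}\frac1h\int_{ih}^{(i+1)h}\delta(x,y,t)\,dt$ ($\delta=1$ if $x(t)\ne y(t)$, else $0$), and $\psi_t(f)=f(\cdot+t)$. $M$ is a compact metric space (e.g. a compact subset of $\mathbb R^d$) and $\phi_1,\dots,\phi_n$ are continuous flows on $M$, $\phi_i$ associated with vertex $i$. For $x\in M$, $f\in\Delta$, $\varphi(\cdot,x,f):\mathbb R\to M$ is the continuous curve with $\varphi(0,x,f)=x$ such that whenever $f\equiv i$ on an interval $I$, $\varphi(t,x,f)=\phi_i(t-s,\varphi(s,x,f))$ for all $s,t$ in the closure of $I$. A set $E\subseteq M$ is a chain set if (i) for every $x\in E$ there is $f\in\Delta$ with $\varphi(t,x,f)\in E$ for all $t\in\mathbb R$, and (ii) for all $x,y\in E$ and all $\varepsilon,T>0$ there are $k\in\mathbb N$, $x_0,\dots,x_k\in M$, $f_0,\dots,f_{k-1}\in\Delta$ and $t_0,\dots,t_{k-1}\ge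 T$ with $x_0=x$, $x_k=y$ and $d(\varphi(t_j,x_j,f_j),x_{j+1})\le\varepsilon$ for $j=0,\dots,k-1$ (an $(\varepsilon,T)$-chain from $x$ to $y$). A maximal chain set is a chain set not properly contained in another chain set. *)

theory Defs
  imports "HOL-Analysis.Analysis"
begin

text \<open>Graph G on vertex set {1..n}: edge relation Gr (a set of pairs, loops allowed).
  barDelta: piecewise-constant functions with steps on [kh,(k+1)h) whose sample
  sequence (x(kh))_k is an infinite path of G.\<close>
definition barDelta :: "nat \<Rightarrow> (nat \<times> nat) set \<Rightarrow> real \<Rightarrow> (real \<Rightarrow> nat) set" where
  "barDelta n Gr h = {x. (\<forall>k::int. \<forall>t. real_of_int k * h \<le> t \<and> t < (real_of_int k + 1) * h
                              \<longrightarrow> x t = x (real_of_int k * h))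
                       \<and> (\<forall>k::int. x (real_of_int k * h) \<in> {1..n}
                              \<and> (x (real_of_int k * h), x ((real_of_int k + 1) * h)) \<in> Gr)}"

definition Delta :: "nat \<Rightarrow> (nat \<times> nat) set \<Rightarrow> real \<Rightarrow> (real \<Rightarrow> nat) set" where
  "Delta n Gr h = {(\<lambda>s. x (s + t)) | x t. x \<in> barDelta n Gr h}"

definition cont_flow :: "'a::metric_space set \<Rightarrow> (real \<Rightarrow> 'a \<Rightarrow> 'a) \<Rightarrow> bool" where
  "cont_flow M \<psi> \<longleftrightarrow> (\<forall>x\<in>M. \<psi> 0 x = x) \<and> (\<forall>x\<in>M. \<forall>t. \<psi> t x \<in> M)
     \<and> (\<forall>x\<in>M. \<forall>s t. \<psi> (s + t) x = \<psi> s (\<psi> t x))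
     \<and> continuous_on (UNIV \<times> M) (\<lambda>(t, x). \<psi> t x)"

definition is_traj :: "(nat \<Rightarrow> real \<Rightarrow> 'a::metric_space \<Rightarrow> 'a) \<Rightarrow> (real \<Rightarrow> nat) \<Rightarrow> 'a \<Rightarrow> (real \<Rightarrow> 'a) \<Rightarrow> bool" where
  "is_traj phi f x \<gamma> \<longleftrightarrow> \<gamma> 0 = x \<and> continuous_on UNIV \<gamma>
     \<and> (\<forall>I i. is_interval (I :: real set) \<and> (\<forall>t\<in>I. f t = i) \<longrightarrow>
          (\<forall>s\<in>closure I. \<forall>t\<in>closure I. \<gamma> t = phi i (t - s) (\<gamma> s)))"

definition hphi :: "(nat \<Rightarrow> real \<Rightarrow> 'a::metric_space \<Rightarrow> 'a) \<Rightarrow> real \<Rightarrow> 'a \<Rightarrow> (real \<Rightarrow> nat) \<Rightarrow> 'a" where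
  "hphi phi t x f = (THE \<gamma>. is_traj phi f x \<gamma>) t"

definition chain_set ::
  "nat \<Rightarrow> (nat \<times> nat) set \<Rightarrow> real \<Rightarrow> 'a::metric_space set \<Rightarrow> (nat \<Rightarrow> real \<Rightarrow> 'a \<Rightarrow> 'a) \<Rightarrow> 'a set \<Rightarrow> bool" where
  "chain_set n Gr h M phi E \<longleftrightarrow> E \<subseteq> M
     \<and> (\<forall>x\<in>E. \<exists>f\<in>Delta n Gr h. \<forall>t. hphi phi t x f \<in> E)
     \<and> (\<forall>x\<in>E. \<forall>y\<in>E. \<forall>\<epsilon>>0. \<forall>T>0. \<exists>(k::nat) (xs::nat \<Rightarrow> 'a) (fs::nat \<Rightarrow> real \<Rightarrow> nat) (ts::nat \<Rightarrow> real).
          k \<ge> 1 \<and> xs 0 = x \<and> xs k = y \<and> (\<forall>j\<le>k. xs j \<in> M)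
          \<and> (\<forall>j<k. fs j \<in> Delta n Gr h \<and> ts j \<ge> T
                 \<and> dist (hphi phi (ts j) (xs j) (fs j)) (xs (Suc j)) \<le> \<epsilon>))"

definition maximal_chain_set ::
  "nat \<Rightarrow> (nat \<times> nat) set \<Rightarrow> real \<Rightarrow> 'a::metric_space set \<Rightarrow> (nat \<Rightarrow> real \<Rightarrow> 'a \<Rightarrow> 'a) \<Rightarrow> 'a set \<Rightarrow> bool" where
  "maximal_chain_set n Gr h M phi E \<longleftrightarrow> chain_set n Gr h M phi E
     \<and> (\<forall>E'. chain_set n Gr h M phi E' \<and> E \<subseteq> E' \<longrightarrow> E' = E)"

end

theory Submission
  imports Defs "HOL-Library.Diagonal_Subsequence" "HOL-Library.Nat_Bijection"
begin


lemma cf_0: "cont_flow M \<psi> \<Longrightarrow> x \<in> M \<Longrightarrow> \<psi> 0 x = x"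
  by (simp add: cont_flow_def)
lemma cf_M: "cont_flow M \<psi> \<Longrightarrow> x \<in> M \<Longrightarrow> \<psi> t x \<in> M"
  by (simp add: cont_flow_def)
lemma cf_add: "cont_flow M \<psi> \<Longrightarrow> x \<in> M \<Longrightarrow> \<psi> (s + t) x = \<psi> s (\<psi> t x)"
  by (simp add: cont_flow_def)
lemma cf_inv: "cont_flow M \<psi> \<Longrightarrow> x \<in> M \<Longrightarrow> \<psi> (-t) (\<psi> t x) = x"
proof -
  assume a: "cont_flow M \<psi>" "x \<in> M"
  have "\<psi> (-t + t) x = \<psi> (-t) (\<psi> t x)" by (rule cf_add[OF a])
  then show ?thesis using cf_0[OF a] by simp
qed
lemma cf_inv': "cont_flow M \<psi> \<Longrightarrow> x \<in> M \<Longrightarrow> \<psi> t (\<psi> (-t) x) = x"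
  by (metis cf_inv minus_minus)
lemma cf_cont: "cont_flow M \<psi> \<Longrightarrow> continuous_on (UNIV \<times> M) (\<lambda>(t, x). \<psi> t x)"
  by (simp add: cont_flow_def)

primrec pf :: "(nat \<Rightarrow> real \<Rightarrow> 'a \<Rightarrow> 'a) \<Rightarrow> real \<Rightarrow> real \<Rightarrow> (int \<Rightarrow> nat) \<Rightarrow> 'a \<Rightarrow> nat \<Rightarrow> 'a" where
  "pf phi h c v x 0 = phi (v 0) (-c) x"
| "pf phi h c v x (Suc k) = phi (v (int k)) h (pf phi h c v x k)"

primrec pb :: "(nat \<Rightarrow> real \<Rightarrow> 'a \<Rightarrow> 'a) \<Rightarrow> real \<Rightarrow> real \<Rightarrow> (int \<Rightarrow> nat) \<Rightarrow> 'a \<Rightarrow> nat \<Rightarrow> 'a" where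
  "pb phi h c v x 0 = phi (v 0) (-c) x"
| "pb phi h c v x (Suc k) = phi (v (- int k - 1)) (-h) (pb phi h c v x k)"

definition pp :: "(nat \<Rightarrow> real \<Rightarrow> 'a \<Rightarrow> 'a) \<Rightarrow> real \<Rightarrow> real \<Rightarrow> (int \<Rightarrow> nat) \<Rightarrow> 'a \<Rightarrow> int \<Rightarrow> 'a" where
  "pp phi h c v x m = (if m \<ge> 0 then pf phi h c v x (nat m) else pb phi h c v x (nat (-m)))"

definition traj :: "(nat \<Rightarrow> real \<Rightarrow> 'a \<Rightarrow> 'a) \<Rightarrow> real \<Rightarrow> real \<Rightarrow> (int \<Rightarrow> nat) \<Rightarrow> 'a \<Rightarrow> real \<Rightarrow> 'a" where
  "traj phi h c v x t = phi (v \<lfloor>(t + c) / h\<rfloor>) (t - (real_of_int \<lfloor>(t + c) / h\<rfloor> * h - c))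
       (pp phi h c v x \<lfloor>(t + c) / h\<rfloor>)"

lemma interval_between:
  fixes I :: "real set"
  assumes I: "is_interval I" and s: "s \<in> closure I" and t: "t \<in> closure I" and sr: "s < r" and rt: "r < t"
  shows "r \<in> I"
proof -
  obtain a where a: "a \<in> I" "dist a s < r - s" using s sr unfolding closure_approachable by (meson diff_gt_0_iff_gt)
  obtain b where b: "b \<in> I" "dist b t < t - r" using t rt unfolding closure_approachable by (meson diff_gt_0_iff_gt)
  have "a \<le> r" "r \<le> b" using a b by (auto simp: dist_real_def)
  then show ?thesis using I a b unfolding is_interval_1 by blast
qed

locale tset =
  fixes M :: "'a::metric_space set" and phi :: "nat \<Rightarrow> real \<Rightarrow> 'a \<Rightarrow> 'a" and h c :: real and v :: "int \<Rightarrow> nat"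
  assumes hpos: "h > 0" and c0: "0 \<le> c" and ch: "c \<le> h"
    and FL: "\<And>j. cont_flow M (phi (v j))"
begin

lemma pf_M: "x \<in> M \<Longrightarrow> pf phi h c v x k \<in> M"
  by (induct k) (auto intro: cf_M FL)
lemma pb_M: "x \<in> M \<Longrightarrow> pb phi h c v x k \<in> M"
  by (induct k) (auto intro: cf_M FL)
lemma pp_M: "x \<in> M \<Longrightarrow> pp phi h c v x m \<in> M"
  by (simp add: pp_def pf_M pb_M)

lemma pp_step: assumes x: "x \<in> M" shows "pp phi h c v x (m + 1) = phi (v m) h (pp phi h c v x m)"
proof (cases "m \<ge> 0")
  case True
  then have "nat (m + 1) = Suc (nat m)" by simp
  then show ?thesis using True by (simp add: pp_def)
next
  case False
  define k where "k = nat (-m-1)"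
  have m: "m = - int k - 1" using False k_def by simp
  have a: "pp phi h c v x m = pb phi h c v x (Suc k)"
    using False by (simp add: pp_def m nat_add_distrib)
  have b: "pp phi h c v x (m + 1) = pb phi h c v x k"
  proof (cases k)
    case 0 then show ?thesis by (simp add: pp_def m)
  next
    case (Suc j)
    have "m + 1 = - int k" by (simp add: m)
    then have "\<not> m + 1 \<ge> 0" using Suc by simp
    then show ?thesis by (simp add: pp_def k_def del: pb.simps)
  qed
  show ?thesis unfolding a b using cf_inv'[OF FL pb_M[OF x]] m by simp
qed

lemma pp_back: assumes x: "x \<in> M" shows "pp phi h c v x m = phi (v m) (-h) (pp phi h c v x (m + 1))"
  unfolding pp_step[OF x] by (simp add: cf_inv[OF FL pp_M[OF x]])

lemma cell: assumes x: "x \<in> M" and s1: "real_of_int m * h - c \<le> s" and s2: "s \<le> real_of_int m * h - c + h"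
  shows "traj phi h c v x s = phi (v m) (s - (real_of_int m * h - c)) (pp phi h c v x m)"
proof (cases "s < real_of_int m * h - c + h")
  case True
  have "\<lfloor>(s + c) / h\<rfloor> = m"
    using s1 True hpos by (subst floor_eq_iff) (auto simp: field_simps)
  then show ?thesis by (simp add: traj_def)
next
  case False
  then have s: "s = real_of_int m * h - c + h" using s2 by simp
  have "(s + c) / h = real_of_int (m + 1)" using hpos by (simp add: s field_simps)
  then have f: "\<lfloor>(s + c) / h\<rfloor> = m + 1" by simp
  show ?thesis unfolding traj_def f
    using pp_step[OF x, of m] by (simp add: s cf_0[OF FL cf_M[OF FL pp_M[OF x]]] algebra_simps)
qed

lemma traj_M: "x \<in> M \<Longrightarrow> traj phi h c v x t \<in> M"
  by (simp add: traj_def cf_M[OF FL] pp_M)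

lemma traj_0: "x \<in> M \<Longrightarrow> traj phi h c v x 0 = x"
  using cell[of x 0 0] c0 ch by (simp add: pp_def cf_inv'[OF FL])


lemma flow_cont_t: assumes "cont_flow M \<psi>" "y \<in> M" shows "continuous_on S (\<lambda>t. \<psi> (t - a) y)"
proof -
  have "continuous_on S (\<lambda>t. (\<lambda>(t, x). \<psi> t x) (t - a, y))"
    by (rule continuous_on_compose2[OF cf_cont[OF assms(1)]]) (auto intro!: continuous_intros simp: assms(2))
  then show ?thesis by simp
qed

lemma cont_cell: assumes x: "x \<in> M"
  shows "continuous_on {real_of_int m * h - c .. real_of_int m * h - c + h} (traj phi h c v x)"
proof -
  have "continuous_on {real_of_int m * h - c .. real_of_int m * h - c + h}
     (\<lambda>t. phi (v m) (t - (real_of_int m * h - c)) (pp phi h c v x m))"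
    by (rule flow_cont_t[OF FL pp_M[OF x]])
  then show ?thesis by (rule continuous_on_eq) (auto simp: cell[OF x])
qed

lemma traj_cont: assumes x: "x \<in> M" shows "continuous_on UNIV (traj phi h c v x)"
proof (rule continuous_at_imp_continuous_on, intro ballI)
  fix t :: real
  define m where "m = \<lfloor>(t + c) / h\<rfloor>"
  have t1: "real_of_int m * h - c \<le> t" and t2: "t < real_of_int m * h - c + h"
    using floor_divide_lower[OF hpos, of "t + c"] floor_divide_upper[OF hpos, of "t + c"]
    unfolding m_def by (auto simp: algebra_simps)
  have e: "real_of_int (m - 1) * h - c + h = real_of_int m * h - c" by (simp add: algebra_simps)
  have "continuous_on ({real_of_int (m-1) * h - c .. real_of_int (m-1) * h - c + h} \<union>
        {real_of_int m * h - c .. real_of_int m * h - c + h}) (traj phi h c v x)"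
    by (rule continuous_on_closed_Un[OF _ _ cont_cell[OF x] cont_cell[OF x]]) auto
  moreover have "t \<in> interior ({real_of_int (m-1) * h - c .. real_of_int (m-1) * h - c + h} \<union>
        {real_of_int m * h - c .. real_of_int m * h - c + h})"
  proof -
    have "{real_of_int (m-1) * h - c .. real_of_int (m-1) * h - c + h} \<union>
        {real_of_int m * h - c .. real_of_int m * h - c + h} = {real_of_int m * h - c - h .. real_of_int m * h - c + h}"
      using e hpos by (auto simp: algebra_simps)
    then show ?thesis using t1 t2 hpos by simp
  qed
  ultimately show "isCont (traj phi h c v x) t" by (rule continuous_on_interior)
qed

lemma floor_bounds: "real_of_int \<lfloor>(t + c) / h\<rfloor> * h - c \<le> t" "t < real_of_int \<lfloor>(t + c) / h\<rfloor> * h - c + h"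
  using floor_divide_lower[OF hpos, of "t + c"] floor_divide_upper[OF hpos, of "t + c"]
  by (auto simp: algebra_simps)

lemma floor_in_cell: "real_of_int m * h - c \<le> t \<Longrightarrow> t < real_of_int m * h - c + h \<Longrightarrow> \<lfloor>(t + c) / h\<rfloor> = m"
  using hpos by (subst floor_eq_iff) (auto simp: field_simps)

lemma segment_aux:
  assumes x: "x \<in> M"
  shows "\<forall>s t. nat (\<lfloor>(t + c) / h\<rfloor> - \<lfloor>(s + c) / h\<rfloor>) = N \<longrightarrow> s < t \<longrightarrow>
     (\<forall>r. s < r \<and> r < t \<longrightarrow> v \<lfloor>(r + c) / h\<rfloor> = i) \<longrightarrow>
     traj phi h c v x t = phi i (t - s) (traj phi h c v x s)"
proof (induction N rule: less_induct)
  case (less N)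
  show ?case
  proof (intro allI impI)
    fix s t assume N: "nat (\<lfloor>(t + c) / h\<rfloor> - \<lfloor>(s + c) / h\<rfloor>) = N" and st: "s < t"
      and F: "\<forall>r. s < r \<and> r < t \<longrightarrow> v \<lfloor>(r + c) / h\<rfloor> = i"
    define m where "m = \<lfloor>(s + c) / h\<rfloor>"
    define a where "a = real_of_int m * h - c"
    have s1: "a \<le> s" and s2: "s < a + h" using floor_bounds[of s] by (auto simp: a_def m_def)
    have first: "traj phi h c v x t' = phi i (t' - s) (traj phi h c v x s)" if "s < t'" "t' \<le> a + h" "t' \<le> t" for t'
    proof -
      have "v \<lfloor>((s + t') / 2 + c) / h\<rfloor> = i" using F that by auto
      moreover have "\<lfloor>((s + t') / 2 + c) / h\<rfloor> = m"
        by (rule floor_in_cell) (use s1 s2 that in \<open>auto simp: a_def\<close>)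
      ultimately have i: "i = v m" by simp
      have "traj phi h c v x t' = phi (v m) (t' - a) (pp phi h c v x m)"
        using cell[OF x, of m t'] s1 that by (simp add: a_def)
      also have "\<dots> = phi (v m) ((t' - s) + (s - a)) (pp phi h c v x m)" by simp
      also have "\<dots> = phi (v m) (t' - s) (phi (v m) (s - a) (pp phi h c v x m))"
        by (rule cf_add[OF FL pp_M[OF x]])
      also have "\<dots> = phi i (t' - s) (traj phi h c v x s)"
        using cell[OF x, of m s] s1 s2 i by (simp add: a_def)
      finally show ?thesis .
    qed
    show "traj phi h c v x t = phi i (t - s) (traj phi h c v x s)"
    proof (cases "t \<le> a + h")
      case True then show ?thesis using first st by simp
    next
      case False
      define b where "b = a + h"
      have fb: "\<lfloor>(b + c) / h\<rfloor> = m + 1"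
        by (rule floor_in_cell) (auto simp: b_def a_def algebra_simps hpos)
      have ft: "\<lfloor>(t + c) / h\<rfloor> \<ge> m + 1"
      proof -
        have "real_of_int (m + 1) * h \<le> t + c" using False by (simp add: a_def algebra_simps)
        then have "real_of_int (m + 1) \<le> (t + c) / h" using hpos by (simp add: field_simps)
        then show ?thesis by (simp add: le_floor_iff)
      qed
      have lt: "nat (\<lfloor>(t + c) / h\<rfloor> - \<lfloor>(b + c) / h\<rfloor>) < N"
        using N ft fb by (simp add: m_def)
      have "traj phi h c v x t = phi i (t - b) (traj phi h c v x b)"
        using less.IH[OF lt] False F st s2 by (auto simp: b_def)
      also have "traj phi h c v x b = phi i (b - s) (traj phi h c v x s)"
        using first[of b] s2 False by (auto simp: b_def)
      also have "phi i (t - b) (phi i (b - s) (traj phi h c v x s)) = phi i (t - s) (traj phi h c v x s)"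
      proof -
        have "v \<lfloor>((s + b) / 2 + c) / h\<rfloor> = i" using F s2 False by (auto simp: b_def)
        then have "cont_flow M (phi i)" using FL by metis
        from cf_add[OF this traj_M[OF x], of "t - b" "b - s" s] show ?thesis by simp
      qed
      finally show ?thesis .
    qed
  qed
qed

lemma segment:
  assumes x: "x \<in> M" and st: "s < t" and F: "\<forall>r. s < r \<and> r < t \<longrightarrow> v \<lfloor>(r + c) / h\<rfloor> = i"
  shows "traj phi h c v x t = phi i (t - s) (traj phi h c v x s)"
  using segment_aux[OF x] st F by blast

lemma is_traj_traj: assumes x: "x \<in> M"
  shows "is_traj phi (\<lambda>s. v \<lfloor>(s + c) / h\<rfloor>) x (traj phi h c v x)"
  unfolding is_traj_def
proof (intro conjI allI impI ballI)
  show "traj phi h c v x 0 = x" by (rule traj_0[OF x])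
  show "continuous_on UNIV (traj phi h c v x)" by (rule traj_cont[OF x])
  fix I :: "real set" and i s t
  assume Ii: "is_interval I \<and> (\<forall>t\<in>I. v \<lfloor>(t + c) / h\<rfloor> = i)" and s: "s \<in> closure I" and t: "t \<in> closure I"
  have "I \<noteq> {}" using s by auto
  then obtain r where "r \<in> I" by auto
  then have "v \<lfloor>(r + c) / h\<rfloor> = i" using Ii by auto
  then have cfi: "cont_flow M (phi i)" using FL by metis
  have seg: "traj phi h c v x b = phi i (b - a) (traj phi h c v x a)" if "a < b" "a \<in> closure I" "b \<in> closure I" for a b
  proof (rule segment[OF x \<open>a < b\<close>], intro allI impI)
    fix r assume r: "a < r \<and> r < b"
    have "r \<in> I" by (rule interval_between[of I a b r]) (use Ii that r in auto)
    then show "v \<lfloor>(r + c) / h\<rfloor> = i" using Ii by blast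
  qed
  consider "s < t" | "s = t" | "t < s" by linarith
  then show "traj phi h c v x t = phi i (t - s) (traj phi h c v x s)"
  proof cases
    case 1 then show ?thesis using seg s t by blast
  next
    case 2 then show ?thesis using cf_0[OF cfi traj_M[OF x]] by simp
  next
    case 3
    then have "traj phi h c v x s = phi i (s - t) (traj phi h c v x t)" using seg s t by blast
    then show ?thesis using cf_inv'[OF cfi traj_M[OF x], of "t - s"] by simp
  qed
qed

lemma traj_unique: assumes x: "x \<in> M" and g: "is_traj phi (\<lambda>s. v \<lfloor>(s + c) / h\<rfloor>) x \<gamma>"
  shows "\<gamma> = traj phi h c v x"
proof -
  have C: "\<gamma> t = phi (v m) (t - s) (\<gamma> s)"
    if "s \<in> {real_of_int m * h - c .. real_of_int m * h - c + h}" "t \<in> {real_of_int m * h - c .. real_of_int m * h - c + h}" for m s t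
  proof -
    let ?I = "{real_of_int m * h - c ..< real_of_int m * h - c + h}"
    have "is_interval ?I" by (simp add: is_interval_cc is_interval_ic)
    moreover have "\<forall>t\<in>?I. v \<lfloor>(t + c) / h\<rfloor> = v m" using floor_in_cell by auto
    moreover have "closure ?I = {real_of_int m * h - c .. real_of_int m * h - c + h}"
      using hpos by (simp add: closure_atLeastLessThan)
    moreover have "\<forall>I i. is_interval (I::real set) \<and> (\<forall>t\<in>I. v \<lfloor>(t + c) / h\<rfloor> = i) \<longrightarrow>
          (\<forall>s\<in>closure I. \<forall>t\<in>closure I. \<gamma> t = phi i (t - s) (\<gamma> s))"
      using g unfolding is_traj_def by blast
    ultimately show ?thesis using that by (metis (no_types, lifting))
  qed
  have g0: "\<gamma> 0 = x" using g by (simp add: is_traj_def)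
  have P: "\<gamma> (real_of_int m * h - c) = pp phi h c v x m" for m
  proof (induction m rule: int_induct[where k = 0])
    case base
    have "\<gamma> (real_of_int 0 * h - c) = phi (v 0) (real_of_int 0 * h - c - 0) (\<gamma> 0)"
      by (rule C) (use c0 ch in auto)
    then show ?case by (simp add: g0 pp_def)
  next
    case (step1 i)
    have "\<gamma> (real_of_int (i + 1) * h - c) = phi (v i) (real_of_int (i + 1) * h - c - (real_of_int i * h - c)) (\<gamma> (real_of_int i * h - c))"
      by (rule C) (use hpos in \<open>auto simp: algebra_simps\<close>)
    then show ?case using step1 pp_step[OF x, of i] by (simp add: algebra_simps)
  next
    case (step2 i)
    have "\<gamma> (real_of_int (i - 1) * h - c) = phi (v (i - 1)) (real_of_int (i - 1) * h - c - (real_of_int i * h - c)) (\<gamma> (real_of_int i * h - c))"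
      by (rule C) (use hpos in \<open>auto simp: algebra_simps\<close>)
    then show ?case using step2 pp_back[OF x, of "i - 1"] by (simp add: algebra_simps)
  qed
  show ?thesis
  proof
    fix t
    define m where "m = \<lfloor>(t + c) / h\<rfloor>"
    have "\<gamma> t = phi (v m) (t - (real_of_int m * h - c)) (\<gamma> (real_of_int m * h - c))"
      by (rule C) (use floor_bounds[of t] hpos in \<open>auto simp: m_def\<close>)
    then show "\<gamma> t = traj phi h c v x t" by (simp add: P traj_def m_def)
  qed
qed

lemma hphi_traj: assumes x: "x \<in> M"
  shows "hphi phi t x (\<lambda>s. v \<lfloor>(s + c) / h\<rfloor>) = traj phi h c v x t"
proof -
  have "(THE \<gamma>. is_traj phi (\<lambda>s. v \<lfloor>(s + c) / h\<rfloor>) x \<gamma>) = traj phi h c v x"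
    by (rule the_equality, rule is_traj_traj[OF x], rule traj_unique[OF x])
  then show ?thesis by (simp add: hphi_def)
qed

end


lemma rep_Delta:
  assumes V: "\<forall>j. v j \<in> {1..n} \<and> (v j, v (j+1)) \<in> Gr" and h: "h > 0"
  shows "(\<lambda>s. v \<lfloor>(s + c) / h\<rfloor>) \<in> Delta n Gr h"
proof -
  define x where "x = (\<lambda>r::real. v \<lfloor>r / h\<rfloor>)"
  have fk: "\<lfloor>(real_of_int k * h) / h\<rfloor> = k" for k using h by simp
  have fk1: "\<lfloor>((real_of_int k + 1) * h) / h\<rfloor> = k + 1" for k
  proof -
    have "((real_of_int k + 1) * h) / h = real_of_int (k + 1)" using h by simp
    then show ?thesis by simp
  qed
  have xk: "x (real_of_int k * h) = v k" for k using fk[of k] by (simp only: x_def)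
  have xk1: "x ((real_of_int k + 1) * h) = v (k + 1)" for k using fk1[of k] by (simp only: x_def)
  have "x \<in> barDelta n Gr h"
    unfolding barDelta_def
  proof (intro CollectI conjI allI impI)
    fix k :: int and t assume "real_of_int k * h \<le> t \<and> t < (real_of_int k + 1) * h"
    then have "\<lfloor>t / h\<rfloor> = k" using h by (subst floor_eq_iff) (auto simp: field_simps)
    moreover have "x (real_of_int k * h) = v k" using fk[of k] by (simp only: x_def)
    ultimately show "x t = x (real_of_int k * h)" by (simp only: x_def)
  next
    fix k :: int
    show "x (real_of_int k * h) \<in> {1..n}" using V by (simp only: xk)
    show "(x (real_of_int k * h), x ((real_of_int k + 1) * h)) \<in> Gr"
      using V by (simp only: xk xk1)
  qed
  moreover have "(\<lambda>s. v \<lfloor>(s + c) / h\<rfloor>) = (\<lambda>s. x (s + c))" by (simp add: x_def)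
  ultimately show ?thesis unfolding Delta_def mem_Collect_eq by (intro exI[of _ x] exI[of _ c]) simp
qed

lemma Delta_rep:
  assumes f: "f \<in> Delta n Gr h" and h: "h > 0"
  shows "\<exists>c v. 0 \<le> c \<and> c < h \<and> (\<forall>j. v j \<in> {1..n} \<and> (v j, v (j+1)) \<in> Gr) \<and> f = (\<lambda>s. v \<lfloor>(s + c) / h\<rfloor>)"
proof -
  obtain x t where f: "f = (\<lambda>s. x (s + t))" and x: "x \<in> barDelta n Gr h" using f unfolding Delta_def by blast
  have X1: "\<And>k t. real_of_int k * h \<le> t \<Longrightarrow> t < (real_of_int k + 1) * h \<Longrightarrow> x t = x (real_of_int k * h)"
   and X2: "\<And>k. x (real_of_int k * h) \<in> {1..n} \<and> (x (real_of_int k * h), x ((real_of_int k + 1) * h)) \<in> Gr"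
    using x unfolding barDelta_def mem_Collect_eq by blast+
  define w where "w = (\<lambda>k::int. x (real_of_int k * h))"
  have xw: "x r = w \<lfloor>r / h\<rfloor>" for r
    unfolding w_def
    by (rule X1) (use floor_divide_lower[OF h, of r] floor_divide_upper[OF h, of r] in auto)
  define q where "q = \<lfloor>t / h\<rfloor>"
  define c where "c = t - real_of_int q * h"
  define v where "v = (\<lambda>j. w (j + q))"
  have c0: "0 \<le> c" "c < h" using floor_divide_lower[OF h, of t] floor_divide_upper[OF h, of t]
    by (auto simp: c_def q_def algebra_simps)
  have V: "\<forall>j. v j \<in> {1..n} \<and> (v j, v (j+1)) \<in> Gr"
  proof
    fix j
    have a: "v j = x (real_of_int (j + q) * h)" by (simp add: v_def w_def)
    have b: "v (j + 1) = x ((real_of_int (j + q) + 1) * h)" unfolding v_def w_def by (simp add: algebra_simps)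
    show "v j \<in> {1..n} \<and> (v j, v (j+1)) \<in> Gr" using X2[of "j + q"] unfolding a b by blast
  qed
  have "f = (\<lambda>s. v \<lfloor>(s + c) / h\<rfloor>)"
  proof
    fix s
    have "(s + t) / h = (s + c) / h + real_of_int q" using h by (simp add: c_def field_simps)
    then have "\<lfloor>(s + t) / h\<rfloor> = \<lfloor>(s + c) / h\<rfloor> + q" by simp
    then have "w \<lfloor>(s + t) / h\<rfloor> = v \<lfloor>(s + c) / h\<rfloor>" by (simp add: v_def)
    moreover have "f s = w \<lfloor>(s + t) / h\<rfloor>" unfolding f by (rule xw)
    ultimately show "f s = v \<lfloor>(s + c) / h\<rfloor>" by simp
  qed
  then show ?thesis using c0 V by blast
qed



lemma flow_lim:
  assumes cf: "cont_flow M \<psi>" and ts: "ts \<longlonglongrightarrow> t" and zs: "zs \<longlonglongrightarrow> z"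
    and zM: "\<forall>k. zs k \<in> M" and z: "z \<in> M"
  shows "(\<lambda>k. \<psi> (ts k) (zs k)) \<longlonglongrightarrow> \<psi> t z"
proof -
  have "(\<lambda>k. (\<lambda>(t, x). \<psi> t x) (ts k, zs k)) \<longlonglongrightarrow> (\<lambda>(t, x). \<psi> t x) (t, z)"
    by (rule continuous_on_tendsto_compose[OF cf_cont[OF cf]])
       (use ts zs zM z in \<open>auto intro: tendsto_Pair\<close>)
  then show ?thesis by simp
qed

lemma tendsto_two:
  fixes X A B :: "nat \<Rightarrow> 'a::metric_space"
  assumes A: "A \<longlonglongrightarrow> L" and B: "B \<longlonglongrightarrow> L" and ev: "eventually (\<lambda>k. X k = A k \<or> X k = B k) sequentially"
  shows "X \<longlonglongrightarrow> L"
proof (rule tendstoI)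
  fix e :: real assume e: "e > 0"
  have "eventually (\<lambda>k. dist (A k) L < e) sequentially" using tendstoD[OF A e] .
  moreover have "eventually (\<lambda>k. dist (B k) L < e) sequentially" using tendstoD[OF B e] .
  ultimately show "eventually (\<lambda>k. dist (X k) L < e) sequentially"
    using ev by eventually_elim auto
qed

lemma traj_conv:
  assumes h: "h > 0"
    and cK: "\<forall>k. 0 \<le> cs k \<and> cs k \<le> h" and cl: "cs \<longlonglongrightarrow> c" and c: "0 \<le> c" "c \<le> h"
    and vK: "\<forall>k j. vs k j \<in> V" and vl: "\<forall>j. eventually (\<lambda>k. vs k j = v j) sequentially"
    and FLV: "\<forall>i\<in>V. cont_flow M (phi i)" and vV: "\<forall>j. v j \<in> V"
    and yK: "\<forall>k. ys k \<in> M" and yl: "ys \<longlonglongrightarrow> y" and y: "y \<in> M"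
  shows "(\<lambda>k. traj phi h (cs k) (vs k) (ys k) t) \<longlonglongrightarrow> traj phi h c v y t"
proof -
  have TK: "tset M phi h (cs k) (vs k)" for k
    using h cK vK FLV by (unfold_locales) auto
  have T: "tset M phi h c v" using h c vV FLV by (unfold_locales) auto
  have cfv: "cont_flow M (phi (v j))" for j using FLV vV by auto
  have PM: "\<forall>k. pp phi h (cs k) (vs k) (ys k) m \<in> M" for m using tset.pp_M[OF TK yK[rule_format]] by blast
  have P: "(\<lambda>k. pp phi h (cs k) (vs k) (ys k) m) \<longlonglongrightarrow> pp phi h c v y m" for m
  proof (induction m rule: int_induct[where k = 0])
    case base
    have "(\<lambda>k. phi (v 0) (- cs k) (ys k)) \<longlonglongrightarrow> phi (v 0) (- c) y"
      by (rule flow_lim[OF cfv]) (use cl yl yK y in \<open>auto intro: tendsto_intros\<close>)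
    moreover have "eventually (\<lambda>k. phi (v 0) (- cs k) (ys k) = pp phi h (cs k) (vs k) (ys k) 0) sequentially"
      using vl[rule_format, of 0] by eventually_elim (simp add: pp_def)
    ultimately show ?case by (simp add: pp_def Lim_transform_eventually)
  next
    case (step1 i)
    have "(\<lambda>k. phi (v i) h (pp phi h (cs k) (vs k) (ys k) i)) \<longlonglongrightarrow> phi (v i) h (pp phi h c v y i)"
      by (rule flow_lim[OF cfv tendsto_const step1(2) PM tset.pp_M[OF T y]])
    moreover have "eventually (\<lambda>k. phi (v i) h (pp phi h (cs k) (vs k) (ys k) i) = pp phi h (cs k) (vs k) (ys k) (i + 1)) sequentially"
      using vl[rule_format, of i] by eventually_elim (simp add: tset.pp_step[OF TK yK[rule_format]])
    ultimately show ?case by (simp add: tset.pp_step[OF T y] Lim_transform_eventually)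
  next
    case (step2 i)
    have "(\<lambda>k. phi (v (i - 1)) (-h) (pp phi h (cs k) (vs k) (ys k) i)) \<longlonglongrightarrow> phi (v (i - 1)) (-h) (pp phi h c v y i)"
      by (rule flow_lim[OF cfv tendsto_const step2(2) PM tset.pp_M[OF T y]])
    moreover have "eventually (\<lambda>k. phi (v (i - 1)) (-h) (pp phi h (cs k) (vs k) (ys k) i) = pp phi h (cs k) (vs k) (ys k) (i - 1)) sequentially"
      using vl[rule_format, of "i - 1"] by eventually_elim (simp add: tset.pp_back[OF TK yK[rule_format], where m = "i - 1"])
    ultimately show ?case by (simp add: tset.pp_back[OF T y, of "i - 1"] Lim_transform_eventually)
  qed
  define m where "m = \<lfloor>(t + c) / h\<rfloor>"
  define a where "a = real_of_int m * h - c"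
  have ta: "a \<le> t" "t < a + h" using tset.floor_bounds[OF T, of t] by (auto simp: a_def m_def)
  have lim_m: "traj phi h c v y t = phi (v m) (t - (real_of_int m * h - c)) (pp phi h c v y m)"
    using tset.cell[OF T y, of m t] ta by (simp add: a_def)
  have A: "(\<lambda>k. phi (v m) (t - (real_of_int m * h - cs k)) (pp phi h (cs k) (vs k) (ys k) m))
       \<longlonglongrightarrow> traj phi h c v y t"
    unfolding lim_m
    by (rule flow_lim[OF cfv _ P PM tset.pp_M[OF T y]]) (intro tendsto_diff tendsto_const cl)
  show ?thesis
  proof (cases "a < t")
    case True
    define d where "d = min (t - a) (a + h - t)"
    have d: "d > 0" using True ta by (simp add: d_def)
    have "eventually (\<lambda>k. dist (cs k) c < d) sequentially" using tendstoD[OF cl d] .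
    moreover have "eventually (\<lambda>k. vs k m = v m) sequentially" using vl by auto
    ultimately have "eventually (\<lambda>k. phi (v m) (t - (real_of_int m * h - cs k)) (pp phi h (cs k) (vs k) (ys k) m)
        = traj phi h (cs k) (vs k) (ys k) t) sequentially"
    proof eventually_elim
      case (elim k)
      have "real_of_int m * h - cs k \<le> t" "t \<le> real_of_int m * h - cs k + h"
      proof -
        have "\<bar>cs k - c\<bar> < t - a" "\<bar>cs k - c\<bar> < a + h - t" using elim(1) by (auto simp: dist_real_def d_def)
        then show "real_of_int m * h - cs k \<le> t" "t \<le> real_of_int m * h - cs k + h"
          unfolding a_def by linarith+
      qed
      then show ?case using tset.cell[OF TK[of k] yK[rule_format, of k], of m t] elim(2) by simp
    qed
    then show ?thesis by (rule Lim_transform_eventually[OF A])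
  next
    case False
    then have ta2: "t = a" using ta by simp
    have B: "(\<lambda>k. phi (v (m - 1)) (t - (real_of_int (m - 1) * h - cs k)) (pp phi h (cs k) (vs k) (ys k) (m - 1)))
       \<longlonglongrightarrow> traj phi h c v y t"
    proof -
      have "traj phi h c v y t = phi (v (m - 1)) (t - (real_of_int (m - 1) * h - c)) (pp phi h c v y (m - 1))"
      proof -
        have e1: "t - (real_of_int (m-1) * h - c) = h" using ta2 by (simp add: a_def algebra_simps)
        show ?thesis by (rule tset.cell[OF T y]) (use e1 h in linarith)+
      qed
      then show ?thesis
        by simp (rule flow_lim[OF cfv _ P PM tset.pp_M[OF T y]], intro tendsto_diff tendsto_const cl)
    qed
    have "eventually (\<lambda>k. vs k m = v m \<and> vs k (m - 1) = v (m - 1)) sequentially"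
      using eventually_conj[OF vl[rule_format, of m] vl[rule_format, of "m - 1"]] .
    then have "eventually (\<lambda>k. traj phi h (cs k) (vs k) (ys k) t =
        phi (v m) (t - (real_of_int m * h - cs k)) (pp phi h (cs k) (vs k) (ys k) m) \<or>
        traj phi h (cs k) (vs k) (ys k) t =
        phi (v (m - 1)) (t - (real_of_int (m - 1) * h - cs k)) (pp phi h (cs k) (vs k) (ys k) (m - 1))) sequentially"
    proof eventually_elim
      case (elim k)
      show ?case
      proof (cases "c \<le> cs k")
        case True
        have "real_of_int m * h - cs k \<le> t" "t \<le> real_of_int m * h - cs k + h"
          using True ta2 cK[rule_format, of k] c by (auto simp: a_def)
        then show ?thesis using tset.cell[OF TK[of k] yK[rule_format, of k], of m t] elim by simp
      next
        case False
        have "real_of_int (m - 1) * h - cs k \<le> t" "t \<le> real_of_int (m - 1) * h - cs k + h"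
          using False ta2 cK[rule_format, of k] c by (auto simp: a_def algebra_simps)
        then show ?thesis using tset.cell[OF TK[of k] yK[rule_format, of k], of "m - 1" t] elim by simp
      qed
    qed
    then show ?thesis by (rule tendsto_two[OF A B])
  qed
qed



lemma closure_inv:
  fixes M :: "'a::metric_space set"
  assumes h: "h > 0" and Mc: "closed M" and FLs: "\<forall>i\<in>{1..n}. cont_flow M (phi i)" and EM: "E \<subseteq> M"
    and EI: "\<forall>x\<in>E. \<exists>f\<in>Delta n Gr h. \<forall>t. hphi phi t x f \<in> E"
    and x: "x \<in> closure E"
  shows "\<exists>f\<in>Delta n Gr h. \<forall>t. hphi phi t x f \<in> closure E"
proof -
  have xM: "x \<in> M" using x closure_minimal[OF EM Mc] by blast
  obtain es where es: "\<forall>k. es k \<in> E" and esl: "es \<longlonglongrightarrow> x" using x unfolding closure_sequential by blast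
  have "\<forall>k. \<exists>p. 0 \<le> fst p \<and> fst p < h \<and> (\<forall>j. snd p j \<in> {1..n} \<and> (snd p j, snd p (j+1)) \<in> Gr)
          \<and> (\<forall>t. hphi phi t (es k) (\<lambda>s. snd p \<lfloor>(s + fst p) / h\<rfloor>) \<in> E)"
  proof
    fix k
    obtain f where f: "f \<in> Delta n Gr h" "\<forall>t. hphi phi t (es k) f \<in> E" using EI es by blast
    obtain c v where cv: "0 \<le> c" "c < h" "\<forall>j. v j \<in> {1..n} \<and> (v j, v (j+1)) \<in> Gr"
      "f = (\<lambda>s. v \<lfloor>(s + c) / h\<rfloor>)" using Delta_rep[OF f(1) h] by blast
    show "\<exists>p. 0 \<le> fst p \<and> fst p < h \<and> (\<forall>j. snd p j \<in> {1..n} \<and> (snd p j, snd p (j+1)) \<in> Gr)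
          \<and> (\<forall>t. hphi phi t (es k) (\<lambda>s. snd p \<lfloor>(s + fst p) / h\<rfloor>) \<in> E)"
      by (rule exI[of _ "(c, v)"]) (use cv f(2) in simp)
  qed
  then obtain p where p: "\<forall>k. 0 \<le> fst (p k) \<and> fst (p k) < h \<and> (\<forall>j. snd (p k) j \<in> {1..n} \<and> (snd (p k) j, snd (p k) (j+1)) \<in> Gr)
          \<and> (\<forall>t. hphi phi t (es k) (\<lambda>s. snd (p k) \<lfloor>(s + fst (p k)) / h\<rfloor>) \<in> E)"
    by (rule choice[THEN exE]) blast
  define cs where "cs = (\<lambda>k. fst (p k))"
  define vs where "vs = (\<lambda>k. snd (p k))"
  have csb: "\<forall>k. cs k \<in> {0..h}" using p by (auto simp: cs_def less_imp_le)
  have vsb: "\<forall>k j. vs k j \<in> {1..n} \<and> (vs k j, vs k (j+1)) \<in> Gr" using p by (auto simp: vs_def)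
  have esE: "\<forall>k t. hphi phi t (es k) (\<lambda>s. vs k \<lfloor>(s + cs k) / h\<rfloor>) \<in> E" using p by (auto simp: vs_def cs_def)
  obtain c r1 where c: "c \<in> {0..h}" and r1: "strict_mono r1" and cl1: "(cs \<circ> r1) \<longlonglongrightarrow> c"
    using compact_imp_seq_compact[OF compact_Icc[of 0 h]] csb unfolding seq_compact_def by meson
  interpret S: subseqs "\<lambda>q s. \<exists>L. \<forall>i. vs (r1 (s i)) (int_decode q) = L"
  proof
    fix q and s :: "nat \<Rightarrow> nat" assume "strict_mono s"
    define a where "a = (\<lambda>i. vs (r1 (s i)) (int_decode q))"
    have "finite (range a)" by (rule finite_subset[of _ "{1..n}"]) (use vsb in \<open>auto simp: a_def\<close>)
    then obtain y where "infinite (a -` {y})" using inf_img_fin_dom[of a UNIV] by auto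
    then obtain r' :: "nat \<Rightarrow> nat" where r': "strict_mono r'" "\<forall>i. r' i \<in> a -` {y}" using infinite_enumerate by blast
    show "\<exists>r'::nat\<Rightarrow>nat. strict_mono r' \<and> (\<exists>L. \<forall>i::nat. vs (r1 ((s \<circ> r') i)) (int_decode q) = L)"
      using r' by (intro exI[of _ r'] conjI exI[of _ y]) (auto simp: a_def)
  qed
  define \<sigma> where "\<sigma> = r1 \<circ> S.diagseq"
  have sig: "strict_mono \<sigma>" unfolding \<sigma>_def using r1 S.subseq_diagseq by (rule strict_mono_o)
  define v where "v = (\<lambda>j. vs (\<sigma> (Suc (int_encode j))) j)"
  have vl: "\<forall>j. eventually (\<lambda>i. vs (\<sigma> i) j = v j) sequentially"
  proof
    fix j
    have "\<exists>L. \<forall>i. vs (r1 ((S.diagseq \<circ> (+) (Suc (int_encode j))) i)) (int_decode (int_encode j)) = L"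
      by (rule S.diagseq_holds) (auto simp: o_def)
    then obtain L where L: "\<forall>i. vs (\<sigma> (Suc (int_encode j) + i)) j = L"
      by (auto simp: \<sigma>_def int_encode_inverse)
    have vL: "v j = L" using L[rule_format, of 0] by (simp add: v_def)
    show "eventually (\<lambda>i. vs (\<sigma> i) j = v j) sequentially"
      unfolding eventually_sequentially
    proof (intro exI allI impI)
      fix i assume "Suc (int_encode j) \<le> i"
      then show "vs (\<sigma> i) j = v j" using L[rule_format, of "i - Suc (int_encode j)"] vL by simp
    qed
  qed
  have vb: "\<forall>j. v j \<in> {1..n} \<and> (v j, v (j+1)) \<in> Gr"
  proof
    fix j
    have "eventually (\<lambda>i. vs (\<sigma> i) j = v j \<and> vs (\<sigma> i) (j+1) = v (j+1)) sequentially"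
      using eventually_conj[OF vl[rule_format, of j] vl[rule_format, of "j+1"]] .
    then obtain N where N: "\<forall>i\<ge>N. vs (\<sigma> i) j = v j \<and> vs (\<sigma> i) (j+1) = v (j+1)"
      unfolding eventually_sequentially by blast
    then have e1: "vs (\<sigma> N) j = v j" and e2: "vs (\<sigma> N) (j+1) = v (j+1)" by auto
    show "v j \<in> {1..n} \<and> (v j, v (j+1)) \<in> Gr" using vsb[rule_format, of "\<sigma> N" j] unfolding e1 e2 .
  qed
  have fD: "(\<lambda>s. v \<lfloor>(s + c) / h\<rfloor>) \<in> Delta n Gr h" by (rule rep_Delta[OF vb h])
  have cl: "(\<lambda>i. cs (\<sigma> i)) \<longlonglongrightarrow> c"
    using LIMSEQ_subseq_LIMSEQ[OF cl1 S.subseq_diagseq] by (simp add: \<sigma>_def o_def)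
  have el: "(\<lambda>i. es (\<sigma> i)) \<longlonglongrightarrow> x"
    using LIMSEQ_subseq_LIMSEQ[OF esl sig] by (simp add: o_def)
  have FLV: "\<forall>i\<in>{1..n}. cont_flow M (phi i)" by (rule FLs)
  have esM: "\<forall>i. es (\<sigma> i) \<in> M" using es EM by blast
  have T: "tset M phi h c v" using h c vb FLs by unfold_locales auto
  have TK: "tset M phi h (cs (\<sigma> i)) (vs (\<sigma> i))" for i using h csb vsb FLs by unfold_locales auto
  show ?thesis
  proof (rule bexI[OF _ fD], rule allI)
    fix t
    have conv: "(\<lambda>i. traj phi h (cs (\<sigma> i)) (vs (\<sigma> i)) (es (\<sigma> i)) t) \<longlonglongrightarrow> traj phi h c v x t"
      by (rule traj_conv[OF h _ cl _ _ _ vl FLV _ esM el xM]) (use csb c vsb vb in auto)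
    have inE: "\<forall>i. traj phi h (cs (\<sigma> i)) (vs (\<sigma> i)) (es (\<sigma> i)) t \<in> E"
      using esE tset.hphi_traj[OF TK esM[rule_format]] by metis
    have "traj phi h c v x t \<in> closure E"
      unfolding closure_sequential
      by (rule exI[where x="\<lambda>i. traj phi h (cs (\<sigma> i)) (vs (\<sigma> i)) (es (\<sigma> i)) t"]) (use conv inE in simp)
    then show "hphi phi t x (\<lambda>s. v \<lfloor>(s + c) / h\<rfloor>) \<in> closure E"
      by (simp add: tset.hphi_traj[OF T xM])
  qed
qed



theorem mainTheorem15:
  fixes n :: nat and Gr :: "(nat \<times> nat) set" and h :: real
    and M :: "'a::metric_space set" and phi :: "nat \<Rightarrow> real \<Rightarrow> 'a \<Rightarrow> 'a" and E :: "'a set"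
  assumes "Gr \<subseteq> {1..n} \<times> {1..n}"
    and "h > 0"
    and "compact M"
    and "\<forall>i\<in>{1..n}. cont_flow M (phi i)"
    and "maximal_chain_set n Gr h M phi E"
  shows "closed E \<and> compact E"
proof -
  note h = assms(2) and FLs = assms(4)
  have Mc: "closed M" using assms(3) by (rule compact_imp_closed)
  have CS: "chain_set n Gr h M phi E" and MAX: "\<forall>E'. chain_set n Gr h M phi E' \<and> E \<subseteq> E' \<longrightarrow> E' = E"
    using assms(5) unfolding maximal_chain_set_def by auto
  have EM: "E \<subseteq> M" and EI: "\<forall>x\<in>E. \<exists>f\<in>Delta n Gr h. \<forall>t. hphi phi t x f \<in> E"
    and EC: "\<forall>x\<in>E. \<forall>y\<in>E. \<forall>\<epsilon>>0. \<forall>T>0. \<exists>(k::nat) (xs::nat \<Rightarrow> 'a) (fs::nat \<Rightarrow> real \<Rightarrow> nat) (ts::nat \<Rightarrow> real).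
          k \<ge> 1 \<and> xs 0 = x \<and> xs k = y \<and> (\<forall>j\<le>k. xs j \<in> M)
          \<and> (\<forall>j<k. fs j \<in> Delta n Gr h \<and> ts j \<ge> T
                 \<and> dist (hphi phi (ts j) (xs j) (fs j)) (xs (Suc j)) \<le> \<epsilon>)"
    using CS unfolding chain_set_def by auto
  have CM: "closure E \<subseteq> M" using closure_minimal[OF EM Mc] .
  have CI: "\<forall>x\<in>closure E. \<exists>f\<in>Delta n Gr h. \<forall>t. hphi phi t x f \<in> closure E"
    using closure_inv[OF h Mc FLs EM EI] by blast
  have "chain_set n Gr h M phi (closure E)"
    unfolding chain_set_def
  proof (intro conjI CM CI ballI allI impI)
    fix x y :: 'a and \<epsilon> T :: real
    assume x: "x \<in> closure E" and y: "y \<in> closure E" and e: "\<epsilon> > 0" and T: "T > 0"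
    obtain f where f: "f \<in> Delta n Gr h" "\<forall>t. hphi phi t x f \<in> closure E" using CI x by blast
    have e2: "\<epsilon> / 2 > 0" using e by simp
    obtain z' where z': "z' \<in> E" "dist z' (hphi phi T x f) < \<epsilon> / 2"
      using f(2) e2 unfolding closure_approachable by blast
    obtain y' where y': "y' \<in> E" "dist y' y < \<epsilon> / 2"
      using y e2 unfolding closure_approachable by blast
    obtain k xs fs ts where ch: "k \<ge> 1" "xs 0 = z'" "xs k = y'" "\<forall>j\<le>k. xs j \<in> M"
      "\<forall>j<k. fs j \<in> Delta n Gr h \<and> ts j \<ge> T \<and> dist (hphi phi (ts j) (xs j) (fs j)) (xs (Suc j)) \<le> \<epsilon> / 2"
      using EC[rule_format, OF z'(1) y'(1) e2 T] by blast
    define xs' where "xs' = (\<lambda>i. if i = 0 then x else if i = k + 1 then y else xs (i - 1))"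
    define fs' where "fs' = (\<lambda>i. if i = 0 then f else fs (i - 1))"
    define ts' where "ts' = (\<lambda>i. if i = 0 then T else ts (i - 1))"
    have xM: "x \<in> M" "y \<in> M" using x y CM by auto
    show "\<exists>(k::nat) (xs::nat \<Rightarrow> 'a) (fs::nat \<Rightarrow> real \<Rightarrow> nat) (ts::nat \<Rightarrow> real).
          k \<ge> 1 \<and> xs 0 = x \<and> xs k = y \<and> (\<forall>j\<le>k. xs j \<in> M)
          \<and> (\<forall>j<k. fs j \<in> Delta n Gr h \<and> ts j \<ge> T
                 \<and> dist (hphi phi (ts j) (xs j) (fs j)) (xs (Suc j)) \<le> \<epsilon>)"
    proof (intro exI conjI)
      show "1 \<le> k + 1" by simp
      show "xs' 0 = x" by (simp add: xs'_def)
      show "xs' (k + 1) = y" by (simp add: xs'_def)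
      show "\<forall>j\<le>k + 1. xs' j \<in> M" using ch(4) xM by (auto simp: xs'_def)
      show "\<forall>j<k + 1. fs' j \<in> Delta n Gr h \<and> T \<le> ts' j \<and> dist (hphi phi (ts' j) (xs' j) (fs' j)) (xs' (Suc j)) \<le> \<epsilon>"
      proof (intro allI impI)
        fix j assume j: "j < k + 1"
        show "fs' j \<in> Delta n Gr h \<and> T \<le> ts' j \<and> dist (hphi phi (ts' j) (xs' j) (fs' j)) (xs' (Suc j)) \<le> \<epsilon>"
        proof (cases j)
          case 0
          have "xs' (Suc 0) = z'" using ch(1,2) by (simp add: xs'_def)
          moreover have "0 \<le> dist z' (hphi phi T x f)" by simp
          then have "dist z' (hphi phi T x f) \<le> \<epsilon>" using z'(2) by linarith
          ultimately show ?thesis using 0 f(1) by (simp add: fs'_def ts'_def xs'_def dist_commute)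
        next
          case (Suc j')
          have j': "j' < k" using j Suc by simp
          have A: "fs j' \<in> Delta n Gr h" "T \<le> ts j'" "dist (hphi phi (ts j') (xs j') (fs j')) (xs (Suc j')) \<le> \<epsilon> / 2"
            using ch(5) j' by auto
          have xj: "xs' j = xs j'" using Suc j' by (simp add: xs'_def)
          have D: "dist (hphi phi (ts j') (xs j') (fs j')) (xs' (Suc j)) \<le> \<epsilon>"
          proof (cases "Suc j' = k")
            case True
            have "xs' (Suc j) = y" using Suc True by (simp add: xs'_def)
            moreover have "dist (hphi phi (ts j') (xs j') (fs j')) y \<le> dist (hphi phi (ts j') (xs j') (fs j')) y' + dist y' y"
              by (rule dist_triangle)
            ultimately show ?thesis using A(3) y'(2) True ch(3) by simp
          next
            case False
            have "xs' (Suc j) = xs (Suc j')" using Suc False j' by (simp add: xs'_def)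
            then show ?thesis using A(3) e by simp
          qed
          show ?thesis using A(1,2) D xj Suc by (simp add: fs'_def ts'_def)
        qed
      qed
    qed
  qed
  then have "closure E = E" using MAX closure_subset by blast
  then have cE: "closed E" by (metis closed_closure)
  moreover have "compact E"
  proof -
    have "compact (M \<inter> E)" by (rule compact_Int_closed[OF assms(3) cE])
    moreover have "M \<inter> E = E" using EM by blast
    ultimately show ?thesis by simp
  qed
  ultimately show ?thesis by simp
qed

end
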